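(* Let $G\in\mathcal{P}_1(\Theta)$ be such that $\operatorname{supp}(G)$ is a non-degenerate interval. Then $G$ has a regular SBA. Furthermore, for every $n\in\mathbb{N}$ the intervals $\bar\Theta_{n,1},\ldots,\bar\Theta_{n,2^n}$ are non-degenerate and form a partition of $\operatorname{supp}(G)$.
   Context: $\Theta\subseteq\mathbb{R}$ is $\mathbb{R}$, a closed half-line, or a compact interval with nonempty interior. $\mathcal{P}_1(\Theta)$: Borel probability measures on $\Theta$ with finite first moment; $G$ is identified with its distribution function. $b_G(a_1,a_2]=\int_{(a_1,a_2]}\theta\,dG/(G(a_2)-G(a_1))$ if $G(a_2)>G(a_1)$, else $a_1$. SBA: $\mu_{1,1}=\int\theta\,dG$; for $j\ge2$, $\mu_{j,2l}=\mu_{j-1,l}$ ($1\le l\le 2^{j-1}-1$), $\mu_{j,2l-1}=b_G(\mu_{j-1,l-1},\mu_{j-1,l}]$ ($1\le l\le 2^{j-1}$), with $\mu_{j,0}=\inf\Theta$, $\mu_{j,2^j}=\sup\Theta$. $G$ has a regular level $n$ SBA if $\mu_{n,1},\ldots,\mu_{n,2^n-1}$ are distinct, and a regular SBA if this holds for all $n$. Level $n$ intervals: $\Theta_{n,1}=[\mu_{n,0},\mu_{n,1}]$ if $\mu_{n,0}>-\infty$, else $(\mu_{n,0},\mu_{n,1}]$; $\Theta_{n,l}=(\mu_{n,l-1},\mu_{n,l}]$ for $2\le l\le 2^n-1$; $\Theta_{n,2^n}=(\mu_{n,2^n-1},\mu_{n,2^n}]$ if $\mu_{n,2^n}<\infty$,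 else $(\mu_{n,2^n-1},\infty)$. Then $\bar\Theta_{n,1}=\Theta_{n,1}\cap\operatorname{supp}(G)$, $\bar\Theta_{n,l}=\Theta_{n,l}$ for $2\le l\le 2^n-1$, $\bar\Theta_{n,2^n}=\Theta_{n,2^n}\cap\operatorname{supp}(G)$. *)

theory Defs
  imports "HOL-Probability.Probability"
begin

text \<open>The parameter set Theta is described by its endpoints lo < hi in the extended reals:
  Theta = {x. lo \<le> x \<le> hi}; this covers R, closed half-lines and compact intervals
  with nonempty interior.\<close>
definition Theta :: "ereal \<Rightarrow> ereal \<Rightarrow> real set" where
  "Theta lo hi = {x. lo \<le> ereal x \<and> ereal x \<le> hi}"

definition supp :: "real measure \<Rightarrow> real set" where
  "supp G = {x. \<forall>e>0. emeasure G (ball x e) > 0}"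

definition bG :: "real measure \<Rightarrow> ereal \<Rightarrow> ereal \<Rightarrow> ereal" where
  "bG G a1 a2 =
     (let S = {x::real. a1 < ereal x \<and> ereal x \<le> a2}
      in if measure G S > 0 then ereal ((LINT x:S|G. x) / measure G S) else a1)"

text \<open>sba G lo hi j l = mu_{j,l} (level 0 is auxiliary: mu_{0,0} = inf Theta, mu_{0,1} = sup Theta).\<close>
fun sba :: "real measure \<Rightarrow> ereal \<Rightarrow> ereal \<Rightarrow> nat \<Rightarrow> nat \<Rightarrow> ereal" where
  "sba G lo hi 0 l = (if l = 0 then lo else hi)"
| "sba G lo hi (Suc 0) l =
     (if l = 0 then lo else if l = 1 then ereal (\<integral>x. x \<partial>G) else hi)"
| "sba G lo hi (Suc (Suc j)) l =
     (if l = 0 then lo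
      else if 2 ^ Suc (Suc j) \<le> l then hi
      else if even l then sba G lo hi (Suc j) (l div 2)
      else bG G (sba G lo hi (Suc j) (l div 2)) (sba G lo hi (Suc j) (l div 2 + 1)))"

definition regular_level_SBA :: "real measure \<Rightarrow> ereal \<Rightarrow> ereal \<Rightarrow> nat \<Rightarrow> bool" where
  "regular_level_SBA G lo hi n = inj_on (sba G lo hi n) {1..2 ^ n - 1}"

definition regular_SBA :: "real measure \<Rightarrow> ereal \<Rightarrow> ereal \<Rightarrow> bool" where
  "regular_SBA G lo hi = (\<forall>n\<ge>1. regular_level_SBA G lo hi n)"

definition SBA_interval :: "real measure \<Rightarrow> ereal \<Rightarrow> ereal \<Rightarrow> nat \<Rightarrow> nat \<Rightarrow> real set" where
  "SBA_interval G lo hi n l =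
     (if l = 1 then {x. lo \<le> ereal x \<and> ereal x \<le> sba G lo hi n 1}
      else {x. sba G lo hi n (l - 1) < ereal x \<and> ereal x \<le> sba G lo hi n l})"

definition SBA_interval_bar :: "real measure \<Rightarrow> ereal \<Rightarrow> ereal \<Rightarrow> nat \<Rightarrow> nat \<Rightarrow> real set" where
  "SBA_interval_bar G lo hi n l =
     (if l = 1 \<or> l = 2 ^ n then SBA_interval G lo hi n l \<inter> supp G
      else SBA_interval G lo hi n l)"

definition nondegenerate_interval :: "real set \<Rightarrow> bool" where
  "nondegenerate_interval S = (is_interval S \<and> (\<exists>x\<in>S. \<exists>y\<in>S. x < y))"

end

theory Submission
  imports Defs
begin


lemma supp_AE:
  assumes sG: "sets G = sets borel"
  shows "AE x in G. x \<in> supp G"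
proof -
  define Q where "Q = {(p,q). p \<in> (\<rat>::real set) \<and> q \<in> \<rat> \<and> emeasure G {p<..<q} = 0}"
  have cQ: "countable Q"
    by (rule countable_subset[of _ "\<rat> \<times> \<rat>"]) (auto simp: Q_def countable_rat)
  have N: "(\<Union>pq\<in>Q. {fst pq<..<snd pq}) \<in> null_sets G"
  proof (rule null_sets_UN'[OF cQ])
    fix pq assume "pq \<in> Q"
    then show "{fst pq<..<snd pq} \<in> null_sets G"
      using sG by (auto simp: Q_def null_sets_def)
  qed
  show ?thesis
  proof (rule AE_I'[OF N], safe)
    fix x assume "x \<notin> supp G"
    then obtain e where e: "e > 0" "\<not> emeasure G (ball x e) > 0" by (auto simp: supp_def)
    then have z: "emeasure G (ball x e) = 0" by (simp add: not_less)
    obtain p where p: "p \<in> \<rat>" "x - e < p" "p < x" using Rats_dense_in_real[of "x-e" x] e by auto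
    obtain q where q: "q \<in> \<rat>" "x < q" "q < x + e" using Rats_dense_in_real[of x "x+e"] e by auto
    have sub: "{p<..<q} \<subseteq> ball x e" using p q by (auto simp: dist_real_def)
    have "emeasure G {p<..<q} \<le> emeasure G (ball x e)"
      by (rule emeasure_mono[OF sub]) (simp add: sG)
    then have "emeasure G {p<..<q} = 0" using z by simp
    then have "(p,q) \<in> Q" using p q by (simp add: Q_def)
    then show "x \<in> (\<Union>pq\<in>Q. {fst pq<..<snd pq})" using p q by force
  qed
qed

lemma mean_lower:
  assumes P: "prob_space G" and sG: "sets G = sets borel" and int: "integrable G (\<lambda>x. x)"
    and S: "S \<in> sets borel" and pos: "\<And>z. emeasure G (S - {z}) > 0"
  shows "\<exists>p\<in>S \<inter> supp G. p < (LINT x:S|G. x) / measure G S"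
proof (rule ccontr)
  interpret prob_space G by (rule P)
  assume neg: "\<not> ?thesis"
  define m where "m = (LINT x:S|G. x) / measure G S"
  have ge: "\<And>p. p \<in> S \<Longrightarrow> p \<in> supp G \<Longrightarrow> m \<le> p" using neg by (auto simp: m_def not_less)
  have SG: "S \<in> sets G" using S sG by simp
  have "0 < emeasure G (S - {0})" by (rule pos)
  also have "\<dots> \<le> emeasure G S" by (rule emeasure_mono) (auto simp: SG)
  finally have "emeasure G S > 0" .
  then have mS: "measure G S > 0" by (simp add: emeasure_eq_measure)
  define f where "f x = indicator S x * (x - m)" for x
  have intS: "integrable G (\<lambda>x. indicator S x * x)"
    using integrable_mult_indicator[OF SG int] by simp
  have intI: "integrable G (indicator S :: real \<Rightarrow> real)"
    using SG by (auto simp: integrable_indicator_iff emeasure_eq_measure)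
  have fint: "integrable G f" unfolding f_def
    using Bochner_Integration.integrable_diff[OF intS integrable_mult_right[OF intI, of m]]
    by (simp add: algebra_simps)
  have "integral\<^sup>L G f = integral\<^sup>L G (\<lambda>x. indicator S x * x) - m * integral\<^sup>L G (indicator S)"
    unfolding f_def
    using Bochner_Integration.integral_diff[OF intS integrable_mult_right[OF intI, of m]]
    by (simp add: algebra_simps)
  also have "\<dots> = 0"
    using mS SG by (simp add: m_def set_lebesgue_integral_def)
  finally have f0: "integral\<^sup>L G f = 0" .
  have "AE x in G. 0 \<le> f x"
    using supp_AE[OF sG] by eventually_elim (auto simp: f_def indicator_def ge)
  then have "AE x in G. f x = 0" using integral_nonneg_eq_0_iff_AE[OF fint] f0 by simp
  then have "AE x in G. x \<in> S - {m} \<longrightarrow> False" by eventually_elim (auto simp: f_def)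
  moreover have "S - {m} \<in> sets G" using S sG by auto
  ultimately have "emeasure G (S - {m}) = 0"
    using AE_iff_measurable[of "S - {m}" G "\<lambda>x. x \<in> S - {m} \<longrightarrow> False"] sets_eq_imp_space_eq[OF sG]
    by auto
  then show False using pos[of m] by simp
qed


lemma mean_upper:
  assumes P: "prob_space G" and sG: "sets G = sets borel" and int: "integrable G (\<lambda>x. x)"
    and S: "S \<in> sets borel" and pos: "\<And>z. emeasure G (S - {z}) > 0"
  shows "\<exists>p\<in>S \<inter> supp G. (LINT x:S|G. x) / measure G S < p"
proof (rule ccontr)
  interpret prob_space G by (rule P)
  assume neg: "\<not> ?thesis"
  define m where "m = (LINT x:S|G. x) / measure G S"
  have ge: "\<And>p. p \<in> S \<Longrightarrow> p \<in> supp G \<Longrightarrow> p \<le> m" using neg by (auto simp: m_def not_less)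
  have SG: "S \<in> sets G" using S sG by simp
  have "0 < emeasure G (S - {0})" by (rule pos)
  also have "\<dots> \<le> emeasure G S" by (rule emeasure_mono) (auto simp: SG)
  finally have "emeasure G S > 0" .
  then have mS: "measure G S > 0" by (simp add: emeasure_eq_measure)
  define f where "f x = indicator S x * (m - x)" for x
  have intS: "integrable G (\<lambda>x. indicator S x * x)"
    using integrable_mult_indicator[OF SG int] by simp
  have intI: "integrable G (indicator S :: real \<Rightarrow> real)"
    using SG by (auto simp: integrable_indicator_iff emeasure_eq_measure)
  have fint: "integrable G f" unfolding f_def
    using Bochner_Integration.integrable_diff[OF integrable_mult_right[OF intI, of m] intS]
    by (simp add: algebra_simps)
  have "integral\<^sup>L G f = m * integral\<^sup>L G (indicator S) - integral\<^sup>L G (\<lambda>x. indicator S x * x)"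
    unfolding f_def
    using Bochner_Integration.integral_diff[OF integrable_mult_right[OF intI, of m] intS]
    by (simp add: algebra_simps)
  also have "\<dots> = 0"
    using mS SG by (simp add: m_def set_lebesgue_integral_def)
  finally have f0: "integral\<^sup>L G f = 0" .
  have "AE x in G. 0 \<le> f x"
    using supp_AE[OF sG] by eventually_elim (auto simp: f_def indicator_def ge)
  then have "AE x in G. f x = 0" using integral_nonneg_eq_0_iff_AE[OF fint] f0 by simp
  then have "AE x in G. x \<in> S - {m} \<longrightarrow> False" by eventually_elim (auto simp: f_def)
  moreover have "S - {m} \<in> sets G" using S sG by auto
  ultimately have "emeasure G (S - {m}) = 0"
    using AE_iff_measurable[of "S - {m}" G "\<lambda>x. x \<in> S - {m} \<longrightarrow> False"] sets_eq_imp_space_eq[OF sG]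
    by auto
  then show False using pos[of m] by simp
qed


lemma Theta_closed: "closed (Theta lo hi)"
proof -
  have "Theta lo hi = {x. lo \<le> ereal x} \<inter> {x. ereal x \<le> hi}" by (auto simp: Theta_def)
  moreover have "closed {x. lo \<le> ereal x}"
    by (rule closed_Collect_le) (auto intro: continuous_on_ereal continuous_on_id)
  moreover have "closed {x. ereal x \<le> hi}"
    by (rule closed_Collect_le) (auto intro: continuous_on_ereal continuous_on_id)
  ultimately show ?thesis by auto
qed

lemma supp_Theta:
  assumes sG: "sets G = sets borel" and z: "emeasure G (UNIV - Theta lo hi) = 0"
  shows "supp G \<subseteq> Theta lo hi"
proof
  fix x assume xs: "x \<in> supp G"
  show "x \<in> Theta lo hi"
  proof (rule ccontr)
    assume "x \<notin> Theta lo hi"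
    then have "x \<in> UNIV - Theta lo hi" by simp
    moreover have "open (UNIV - Theta lo hi)" using Theta_closed by (simp add: open_Diff)
    ultimately obtain e where e: "e > 0" "ball x e \<subseteq> UNIV - Theta lo hi"
      using open_contains_ball by blast
    have "emeasure G (ball x e) \<le> emeasure G (UNIV - Theta lo hi)"
      by (rule emeasure_mono[OF e(2)]) (use sG Theta_closed in auto)
    then have "emeasure G (ball x e) = 0" using z by simp
    then show False using xs e(1) by (auto simp: supp_def)
  qed
qed

lemma interval_interior:
  fixes I :: "real set"
  assumes "is_interval I" "r \<in> I" "s \<in> I" "r < y" "y < s"
  shows "y \<in> interior I"
proof -
  have "{r<..<s} \<subseteq> I"
  proof
    fix x assume "x \<in> {r<..<s}"
    then show "x \<in> I" using assms(1-3) unfolding is_interval_1 by (meson greaterThanLessThan_iff less_imp_le)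
  qed
  then have "{r<..<s} \<subseteq> interior I" by (rule interior_maximal) simp
  then show ?thesis using assms by auto
qed

lemma interior_Theta:
  assumes "I \<subseteq> Theta lo hi" "y \<in> interior I"
  shows "lo < ereal y \<and> ereal y < hi"
proof -
  obtain e where e: "e > 0" "ball y e \<subseteq> I" using assms(2) by (auto simp: mem_interior)
  have "y - e/2 \<in> I" "y + e/2 \<in> I" using e by (auto intro!: subsetD[OF e(2)] simp: dist_real_def)
  then have "lo \<le> ereal (y - e/2)" "ereal (y + e/2) \<le> hi" using assms(1) by (auto simp: Theta_def)
  moreover have "ereal (y - e/2) < ereal y" "ereal y < ereal (y + e/2)" using e by auto
  ultimately show ?thesis by (meson le_less_trans less_le_trans)
qed

lemma core:
  assumes P: "prob_space G" and sG: "sets G = sets borel" and int: "integrable G (\<lambda>x. x)"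
    and S: "S \<in> sets borel" and e: "e > 0" "ball y e \<subseteq> S \<inter> supp G"
  shows "measure G S > 0 \<and> (\<exists>p\<in>S \<inter> supp G. p < (LINT x:S|G. x) / measure G S)
     \<and> (\<exists>p\<in>S \<inter> supp G. (LINT x:S|G. x) / measure G S < p)"
proof -
  interpret prob_space G by (rule P)
  have pos: "emeasure G (S - {z}) > 0" for z
  proof -
    define y' where "y' = (if z = y then y + e/2 else y)"
    define r where "r = min (e/2) \<bar>y' - z\<bar>"
    have r: "r > 0" using e(1) by (auto simp: r_def y'_def)
    have dy: "dist y y' \<le> e/2" using e(1) by (auto simp: y'_def dist_real_def)
    have sub1: "ball y' r \<subseteq> ball y e"
    proof
      fix x assume "x \<in> ball y' r"
      then have "dist y' x < r" by simp
      then show "x \<in> ball y e" using dy e(1) r_def dist_triangle[of y x y'] by auto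
    qed
    have "z \<notin> ball y' r" by (auto simp: r_def dist_real_def)
    then have sub: "ball y' r \<subseteq> S - {z}" using sub1 e(2) by auto
    have "y' \<in> ball y e" using dy e(1) by auto
    then have "y' \<in> supp G" using e(2) by auto
    then have "emeasure G (ball y' r) > 0" using r by (auto simp: supp_def)
    also have "\<dots> \<le> emeasure G (S - {z})" by (rule emeasure_mono[OF sub]) (use S sG in auto)
    finally show ?thesis .
  qed
  have "0 < emeasure G (S - {0})" by (rule pos)
  also have "\<dots> \<le> emeasure G S" by (rule emeasure_mono) (use S sG in auto)
  finally have "emeasure G S > 0" .
  then have mS: "measure G S > 0" by (simp add: emeasure_eq_measure)
  show ?thesis using mS mean_lower[OF P sG int S pos] mean_upper[OF P sG int S pos] by blast
qed

definition inner :: "real measure \<Rightarrow> ereal \<Rightarrow> bool" where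
  "inner G c \<longleftrightarrow> (\<exists>r. c = ereal r \<and> r \<in> interior (supp G))"



lemma exists_between:
  assumes iv: "is_interval I" and nd: "\<exists>x\<in>I. \<exists>y\<in>I. x < y" and cd: "c < d"
    and Th: "I \<subseteq> Theta lo hi"
    and hc: "c = lo \<or> (\<exists>r. c = ereal r \<and> r \<in> interior I)"
    and hd: "d = hi \<or> (\<exists>r. d = ereal r \<and> r \<in> interior I)"
  shows "\<exists>y\<in>interior I. c < ereal y \<and> ereal y < d"
proof -
  have A: "\<exists>y\<in>interior I. ereal r < ereal y" if "r \<in> interior I" for r
  proof -
    have "r \<in> interior (interior I)" using that by simp
    then obtain e where e: "e > 0" "ball r e \<subseteq> interior I"
      unfolding mem_interior by blast
    have "r + e/2 \<in> ball r e" using e(1) by (simp add: dist_real_def)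
    then have "r + e/2 \<in> interior I" using e(2) by blast
    then show ?thesis using e(1) by (intro bexI[of _ "r + e/2"]) auto
  qed
  have B: "\<exists>y\<in>interior I. ereal y < ereal r" if "r \<in> interior I" for r
  proof -
    have "r \<in> interior (interior I)" using that by simp
    then obtain e where e: "e > 0" "ball r e \<subseteq> interior I"
      unfolding mem_interior by blast
    have "r - e/2 \<in> ball r e" using e(1) by (simp add: dist_real_def)
    then have "r - e/2 \<in> interior I" using e(2) by blast
    then show ?thesis using e(1) by (intro bexI[of _ "r - e/2"]) auto
  qed
  show ?thesis
  proof (cases "\<exists>r. c = ereal r \<and> r \<in> interior I")
    case True
    then obtain r where r: "c = ereal r" "r \<in> interior I" by auto
    show ?thesis
    proof (cases "\<exists>s. d = ereal s \<and> s \<in> interior I")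
      case True
      then obtain s where s: "d = ereal s" "s \<in> interior I" by auto
      have "r < s" using cd r s by simp
      have "r \<in> I" "s \<in> I" using r(2) s(2) interior_subset by auto
      then have "(r+s)/2 \<in> interior I"
        using interval_interior[OF iv, of r s "(r+s)/2"] \<open>r < s\<close> by auto
      then show ?thesis using r s \<open>r < s\<close> by (intro bexI[of _ "(r+s)/2"]) auto
    next
      case False
      then have "d = hi" using hd by auto
      obtain y where y: "y \<in> interior I" "ereal r < ereal y" using A[OF r(2)] by auto
      then show ?thesis using interior_Theta[OF Th y(1)] r \<open>d = hi\<close> by auto
    qed
  next
    case False
    then have "c = lo" using hc by auto
    show ?thesis
    proof (cases "\<exists>s. d = ereal s \<and> s \<in> interior I")
      case True
      then obtain s where s: "d = ereal s" "s \<in> interior I" by auto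
      obtain y where y: "y \<in> interior I" "ereal y < ereal s" using B[OF s(2)] by auto
      then show ?thesis using interior_Theta[OF Th y(1)] s \<open>c = lo\<close> by auto
    next
      case False
      then have "d = hi" using hd by auto
      obtain x z where xz: "x \<in> I" "z \<in> I" "x < z" using nd by auto
      have "(x+z)/2 \<in> interior I" using interval_interior[OF iv xz(1,2)] xz(3) by auto
      then show ?thesis using interior_Theta[OF Th] \<open>c = lo\<close> \<open>d = hi\<close> by blast
    qed
  qed
qed


lemma bG_good:
  assumes P: "prob_space G" and sG: "sets G = sets borel" and int: "integrable G (\<lambda>x. x)"
    and iv: "is_interval (supp G)" and nd: "\<exists>x\<in>supp G. \<exists>y\<in>supp G. x < y"
    and Th: "supp G \<subseteq> Theta lo hi" and cd: "c < d"
    and hc: "c = lo \<or> inner G c" and hd: "d = hi \<or> inner G d"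
  shows "\<exists>m. bG G c d = ereal m \<and> m \<in> interior (supp G) \<and> c < ereal m \<and> ereal m < d"
proof -
  have hc': "c = lo \<or> (\<exists>r. c = ereal r \<and> r \<in> interior (supp G))" using hc by (simp add: inner_def)
  have hd': "d = hi \<or> (\<exists>r. d = ereal r \<and> r \<in> interior (supp G))" using hd by (simp add: inner_def)
  obtain y where y: "y \<in> interior (supp G)" "c < ereal y" "ereal y < d"
    using exists_between[OF iv nd cd Th hc' hd'] by blast
  define S where "S = {x::real. c < ereal x \<and> ereal x \<le> d}"
  define Oo where "Oo = {x::real. c < ereal x} \<inter> {x. ereal x < d} \<inter> interior (supp G)"
  have o1: "open {x::real. c < ereal x}"
    by (rule open_Collect_less) (auto intro: continuous_on_ereal continuous_on_id)
  have o2: "open {x::real. ereal x < d}"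
    by (rule open_Collect_less) (auto intro: continuous_on_ereal continuous_on_id)
  have oO: "open Oo" unfolding Oo_def using o1 o2 by (intro open_Int) auto
  have yO: "y \<in> Oo" using y by (simp add: Oo_def)
  obtain e where e: "e > 0" "ball y e \<subseteq> Oo" using open_contains_ball_eq[OF oO] yO by blast
  have e2: "ball y e \<subseteq> S \<inter> supp G"
  proof
    fix x assume "x \<in> ball y e"
    then have "x \<in> Oo" using e(2) by blast
    then have "c < ereal x" "ereal x < d" "x \<in> interior (supp G)" by (auto simp: Oo_def)
    then show "x \<in> S \<inter> supp G" using interior_subset[of "supp G"] by (auto simp: S_def)
  qed
  have Sb: "S \<in> sets borel" unfolding S_def by measurable
  define m where "m = (LINT x:S|G. x) / measure G S"
  obtain p q where mS: "measure G S > 0" and p: "p \<in> S \<inter> supp G" "p < m" and q: "q \<in> S \<inter> supp G" "m < q"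
    using core[OF P sG int Sb e(1) e2] unfolding m_def[symmetric] by blast
  have "m \<in> interior (supp G)" using interval_interior[OF iv, of p q m] p q by auto
  moreover have "c < ereal m"
  proof -
    have "c < ereal p" using p by (simp add: S_def)
    also have "ereal p < ereal m" using p by simp
    finally show ?thesis .
  qed
  moreover have "ereal m < d"
  proof -
    have "ereal m < ereal q" using q by simp
    also have "ereal q \<le> d" using q by (simp add: S_def)
    finally show ?thesis .
  qed
  moreover have "bG G c d = ereal m"
    unfolding bG_def Let_def S_def[symmetric] using mS by (simp add: m_def)
  ultimately show ?thesis by blast
qed


definition inv_lvl :: "real measure \<Rightarrow> ereal \<Rightarrow> ereal \<Rightarrow> nat \<Rightarrow> bool" where
  "inv_lvl G lo hi n \<longleftrightarrow> sba G lo hi n 0 = lo \<and> sba G lo hi n (2^n) = hi \<and>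
     (\<forall>l<2^n. sba G lo hi n l < sba G lo hi n (Suc l)) \<and>
     (\<forall>l. 0 < l \<and> l < 2^n \<longrightarrow> inner G (sba G lo hi n l))"

lemma inv_base:
  assumes P: "prob_space G" and sG: "sets G = sets borel" and int: "integrable G (\<lambda>x. x)"
    and iv: "is_interval (supp G)" and nd: "\<exists>x\<in>supp G. \<exists>y\<in>supp G. x < y"
    and Th: "supp G \<subseteq> Theta lo hi" and lh: "lo < hi"
  shows "inv_lvl G lo hi (Suc 0)"
proof -
  interpret prob_space G by (rule P)
  obtain y where y: "y \<in> interior (supp G)"
    using exists_between[OF iv nd lh Th] by blast
  obtain e where e: "e > 0" "ball y e \<subseteq> interior (supp G)"
    using y open_contains_ball_eq[OF open_interior] by blast
  have e2: "ball y e \<subseteq> UNIV \<inter> supp G" using e(2) interior_subset by blast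
  have sp: "space G = UNIV" using sets_eq_imp_space_eq[OF sG] by simp
  have m1: "measure G UNIV = 1" using prob_space sp by simp
  have li: "(LINT x:UNIV|G. x) = (\<integral>x. x \<partial>G)" by (simp add: set_lebesgue_integral_def)
  define m where "m = (\<integral>x. x \<partial>G)"
  obtain p q where p: "p \<in> supp G" "p < m" and q: "q \<in> supp G" "m < q"
    using core[OF P sG int _ e(1) e2] m1 li unfolding m_def by auto
  have mi: "m \<in> interior (supp G)" using interval_interior[OF iv, of p q m] p q by auto
  have lm: "lo < ereal m \<and> ereal m < hi" using interior_Theta[OF Th mi] .
  have s1: "sba G lo hi (Suc 0) l = (if l = 0 then lo else if l = 1 then ereal m else hi)" for l
    by (simp add: m_def)
  show ?thesis unfolding inv_lvl_def
  proof (intro conjI allI impI)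
    fix l :: nat assume "l < 2 ^ Suc 0"
    then have "l = 0 \<or> l = 1" by auto
    then show "sba G lo hi (Suc 0) l < sba G lo hi (Suc 0) (Suc l)" using lm unfolding m_def by auto
  next
    fix l :: nat assume "0 < l \<and> l < 2 ^ Suc 0"
    then have "l = 1" by auto
    then show "inner G (sba G lo hi (Suc 0) l)" using mi unfolding m_def by (auto simp: inner_def)
  qed (auto simp: s1)
qed

lemma inv_step:
  assumes P: "prob_space G" and sG: "sets G = sets borel" and int: "integrable G (\<lambda>x. x)"
    and iv: "is_interval (supp G)" and nd: "\<exists>x\<in>supp G. \<exists>y\<in>supp G. x < y"
    and Th: "supp G \<subseteq> Theta lo hi" and IH: "inv_lvl G lo hi (Suc j)"
  shows "inv_lvl G lo hi (Suc (Suc j))"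
proof -
  define M where "M = Suc j"
  have IH': "sba G lo hi M 0 = lo" "sba G lo hi M (2^M) = hi"
     "\<And>l. l < 2^M \<Longrightarrow> sba G lo hi M l < sba G lo hi M (Suc l)"
     "\<And>l. 0 < l \<Longrightarrow> l < 2^M \<Longrightarrow> inner G (sba G lo hi M l)"
    using IH unfolding inv_lvl_def M_def by auto
  have pw: "(2::nat) ^ Suc (Suc j) = 2 * 2^M" by (simp add: M_def)
  have ev: "sba G lo hi (Suc (Suc j)) (2*k) = sba G lo hi M k" if "k \<le> 2^M" for k
  proof (cases "k = 0")
    case True then show ?thesis using IH' by simp
  next
    case False
    show ?thesis
    proof (cases "k = 2^M")
      case True then show ?thesis using IH' pw by simp
    next
      case False
      then have "2*k < 2 * 2^M" using that by simp
      then show ?thesis using \<open>k \<noteq> 0\<close> pw by (simp add: M_def)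
    qed
  qed
  have od: "sba G lo hi (Suc (Suc j)) (2*k+1) = bG G (sba G lo hi M k) (sba G lo hi M (Suc k))"
    if "k < 2^M" for k
  proof -
    have "\<not> 2 ^ Suc (Suc j) \<le> 2*k+1" using that pw by simp
    moreover have "(2*k+1) div 2 = k" by simp
    ultimately show ?thesis by (simp add: M_def)
  qed
  have good: "\<exists>m. bG G (sba G lo hi M k) (sba G lo hi M (Suc k)) = ereal m \<and> m \<in> interior (supp G)
      \<and> sba G lo hi M k < ereal m \<and> ereal m < sba G lo hi M (Suc k)" if "k < 2^M" for k
  proof (rule bG_good[OF P sG int iv nd Th])
    show "sba G lo hi M k < sba G lo hi M (Suc k)" using IH'(3) that .
    show "sba G lo hi M k = lo \<or> inner G (sba G lo hi M k)"
      using IH'(1) IH'(4)[of k] that by (cases "k = 0") auto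
    show "sba G lo hi M (Suc k) = hi \<or> inner G (sba G lo hi M (Suc k))"
      using IH'(2) IH'(4)[of "Suc k"] that by (cases "Suc k = 2^M") auto
  qed
  show ?thesis unfolding inv_lvl_def
  proof (intro conjI allI impI)
    show "sba G lo hi (Suc (Suc j)) 0 = lo" by simp
    show "sba G lo hi (Suc (Suc j)) (2 ^ Suc (Suc j)) = hi" by simp
  next
    fix l :: nat assume l: "l < 2 ^ Suc (Suc j)"
    define k where "k = l div 2"
    have "l < 2^M * 2" using l unfolding pw by simp
    then have k: "k < 2^M" unfolding k_def by (rule less_mult_imp_div_less)
    obtain m where m: "bG G (sba G lo hi M k) (sba G lo hi M (Suc k)) = ereal m"
      "sba G lo hi M k < ereal m" "ereal m < sba G lo hi M (Suc k)" using good[OF k] by blast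
    have "l = 2*k \<or> l = 2*k+1" by (auto simp: k_def)
    then show "sba G lo hi (Suc (Suc j)) l < sba G lo hi (Suc (Suc j)) (Suc l)"
    proof
      assume "l = 2*k"
      then show ?thesis using ev[of k] od[OF k] m k by simp
    next
      assume "l = 2*k+1"
      then have "Suc l = 2 * Suc k" by simp
      then show ?thesis using ev[of "Suc k"] od[OF k] m k \<open>l = 2*k+1\<close> by simp
    qed
  next
    fix l :: nat assume l: "0 < l \<and> l < 2 ^ Suc (Suc j)"
    define k where "k = l div 2"
    have "l < 2^M * 2" using l unfolding pw by simp
    then have k: "k < 2^M" unfolding k_def by (rule less_mult_imp_div_less)
    obtain m where m: "bG G (sba G lo hi M k) (sba G lo hi M (Suc k)) = ereal m"
      "m \<in> interior (supp G)" using good[OF k] by blast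
    have "l = 2*k \<or> l = 2*k+1" by (auto simp: k_def)
    then show "inner G (sba G lo hi (Suc (Suc j)) l)"
    proof
      assume "l = 2*k"
      then have "0 < k" using l by simp
      then show ?thesis using ev[of k] IH'(4)[of k] k \<open>l = 2*k\<close> by simp
    next
      assume "l = 2*k+1"
      then show ?thesis using od[OF k] m by (simp add: inner_def)
    qed
  qed
qed

lemma inv_all:
  assumes P: "prob_space G" and sG: "sets G = sets borel" and int: "integrable G (\<lambda>x. x)"
    and iv: "is_interval (supp G)" and nd: "\<exists>x\<in>supp G. \<exists>y\<in>supp G. x < y"
    and Th: "supp G \<subseteq> Theta lo hi" and lh: "lo < hi"
  shows "inv_lvl G lo hi (Suc j)"
proof (induction j)
  case 0 then show ?case using inv_base[OF assms] by simp
next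
  case (Suc j) then show ?case using inv_step[OF P sG int iv nd Th] by blast
qed


lemma chain_mono:
  fixes f :: "nat \<Rightarrow> ereal"
  assumes "\<forall>l<N. f l < f (Suc l)" "l < l'" "l' \<le> N"
  shows "f l < f l'"
  using assms(2,3)
proof (induction l')
  case 0 then show ?case by simp
next
  case (Suc l')
  show ?case
  proof (cases "l = l'")
    case True then show ?thesis using assms(1) Suc.prems by auto
  next
    case False
    then have "f l < f l'" using Suc by auto
    also have "f l' < f (Suc l')" using assms(1) Suc.prems by auto
    finally show ?thesis .
  qed
qed

lemma chain_find:
  fixes f :: "nat \<Rightarrow> ereal"
  assumes "f a < x" "x \<le> f b" "a < b"
  shows "\<exists>l. a < l \<and> l \<le> b \<and> f (l - 1) < x \<and> x \<le> f l"
  using assms(2,3)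
proof (induction b)
  case 0 then show ?case by simp
next
  case (Suc b)
  show ?case
  proof (cases "x \<le> f b \<and> a < b")
    case True then show ?thesis using Suc.IH by (metis le_SucI)
  next
    case False
    then have "\<not> x \<le> f b \<or> \<not> a < b" by simp
    then have "f b < x"
    proof
      assume "\<not> x \<le> f b" then show ?thesis by simp
    next
      assume "\<not> a < b" then have "a = b" using Suc.prems by simp
      then show ?thesis using assms(1) by simp
    qed
    then show ?thesis using Suc.prems by (intro exI[of _ "Suc b"]) auto
  qed
qed

lemma ivl1: "is_interval {x::real. a \<le> ereal x \<and> ereal x \<le> b}"
  unfolding is_interval_1
proof (intro ballI allI impI)
  fix u v x assume u: "u \<in> {x::real. a \<le> ereal x \<and> ereal x \<le> b}" and v: "v \<in> {x::real. a \<le> ereal x \<and> ereal x \<le> b}"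
    and x: "u \<le> x \<and> x \<le> v"
  have ux: "ereal u \<le> ereal x" and xv: "ereal x \<le> ereal v" using x by auto
  have ua: "a \<le> ereal u" using u by simp
  have vb: "ereal v \<le> b" using v by simp
  have "a \<le> ereal x" using order_trans[OF ua ux] .
  moreover have "ereal x \<le> b" using order_trans[OF xv vb] .
  ultimately show "x \<in> {x::real. a \<le> ereal x \<and> ereal x \<le> b}" by simp
qed

lemma ivl2: "is_interval {x::real. a < ereal x \<and> ereal x \<le> b}"
  unfolding is_interval_1
proof (intro ballI allI impI)
  fix u v x assume u: "u \<in> {x::real. a < ereal x \<and> ereal x \<le> b}" and v: "v \<in> {x::real. a < ereal x \<and> ereal x \<le> b}"
    and x: "u \<le> x \<and> x \<le> v"
  have ux: "ereal u \<le> ereal x" and xv: "ereal x \<le> ereal v" using x by auto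
  have ua: "a < ereal u" using u by simp
  have vb: "ereal v \<le> b" using v by simp
  have "a < ereal x" using less_le_trans[OF ua ux] .
  moreover have "ereal x \<le> b" using order_trans[OF xv vb] .
  ultimately show "x \<in> {x::real. a < ereal x \<and> ereal x \<le> b}" by simp
qed

lemma nondeg_pts: "is_interval S \<Longrightarrow> a \<in> S \<Longrightarrow> b \<in> S \<Longrightarrow> a < b \<Longrightarrow> nondegenerate_interval S"
  unfolding nondegenerate_interval_def by blast

lemma interior_ball: "r \<in> interior I \<Longrightarrow> \<exists>e>0. ball r e \<subseteq> I"
  by (simp add: mem_interior)

theorem lemma1:
  fixes G :: "real measure" and lo hi :: ereal
  assumes "lo < hi"
    and "prob_space G"
    and "sets G = sets borel"
    and "emeasure G (UNIV - Theta lo hi) = 0"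
    and "integrable G (\<lambda>x. x)"
    and "nondegenerate_interval (supp G)"
  shows "regular_SBA G lo hi \<and>
    (\<forall>n\<ge>1. (\<forall>l\<in>{1..2^n}. nondegenerate_interval (SBA_interval_bar G lo hi n l)) \<and>
      (\<forall>l\<in>{1..2^n}. \<forall>l'\<in>{1..2^n}. l \<noteq> l' \<longrightarrow>
          SBA_interval_bar G lo hi n l \<inter> SBA_interval_bar G lo hi n l' = {}) \<and>
      (\<Union>l\<in>{1..2^n}. SBA_interval_bar G lo hi n l) = supp G)"
proof -
  note P = assms(2) and sG = assms(3) and int = assms(5)
  have iv: "is_interval (supp G)" and nd: "\<exists>x\<in>supp G. \<exists>y\<in>supp G. x < y"
    using assms(6) by (auto simp: nondegenerate_interval_def)
  have Th: "supp G \<subseteq> Theta lo hi" by (rule supp_Theta[OF sG assms(4)])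
  have INV: "inv_lvl G lo hi n" if n1: "n \<ge> 1" for n
  proof -
    obtain j where "n = Suc j" using n1 by (cases n) auto
    then show ?thesis using inv_all[OF P sG int iv nd Th assms(1)] by simp
  qed
  have MONO: "sba G lo hi n l < sba G lo hi n l'" if "n \<ge> 1" "l < l'" "l' \<le> 2^n" for n l l'
    using chain_mono[of "2^n" "sba G lo hi n" l l'] INV[OF that(1)] that by (auto simp: inv_lvl_def)
  have MONO': "sba G lo hi n l \<le> sba G lo hi n l'" if "n \<ge> 1" "l \<le> l'" "l' \<le> 2^n" for n l l'
    using MONO[OF that(1) _ that(3), of l] that(2) by (cases "l = l'") auto
  have INNER: "\<exists>r. sba G lo hi n l = ereal r \<and> r \<in> interior (supp G)" if "n \<ge> 1" "0 < l" "l < 2^n" for n l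
    using INV[OF that(1)] that by (auto simp: inv_lvl_def inner_def)
  have reg: "regular_SBA G lo hi"
    unfolding regular_SBA_def regular_level_SBA_def
  proof (intro allI impI inj_onI)
    fix n x y assume n: "1 \<le> n" and x: "x \<in> {1..2 ^ n - 1}" and y: "y \<in> {1..2 ^ n - 1}"
      and eq: "sba G lo hi n x = sba G lo hi n y"
    have "2^n - 1 < (2::nat)^n" by simp
    then have xl: "x \<le> 2^n" and yl: "y \<le> 2^n" using x y by auto
    show "x = y"
    proof (rule ccontr)
      assume "x \<noteq> y"
      then have "x < y \<or> y < x" by auto
      then show False using MONO[OF n _ yl, of x] MONO[OF n _ xl, of y] eq by auto
    qed
  qed
  have main: "(\<forall>l\<in>{1..2^n}. nondegenerate_interval (SBA_interval_bar G lo hi n l)) \<and>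
      (\<forall>l\<in>{1..2^n}. \<forall>l'\<in>{1..2^n}. l \<noteq> l' \<longrightarrow>
          SBA_interval_bar G lo hi n l \<inter> SBA_interval_bar G lo hi n l' = {}) \<and>
      (\<Union>l\<in>{1..2^n}. SBA_interval_bar G lo hi n l) = supp G" if n: "n \<ge> 1" for n
  proof -
    define \<mu> where "\<mu> = sba G lo hi n"
    have mu0: "\<mu> 0 = lo" and muN: "\<mu> (2^n) = hi" using INV[OF n] by (auto simp: inv_lvl_def \<mu>_def)
    have two: "(2::nat) \<le> 2^n" using n by (metis one_le_numeral power_increasing power_one_right)
    have I1: "SBA_interval G lo hi n 1 = {x. lo \<le> ereal x \<and> ereal x \<le> \<mu> 1}"
      by (simp add: SBA_interval_def \<mu>_def)
    have Il: "SBA_interval G lo hi n l = {x. \<mu> (l - 1) < ereal x \<and> ereal x \<le> \<mu> l}" if "l \<noteq> 1" for l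
      using that by (simp add: SBA_interval_def \<mu>_def)
    have B1: "SBA_interval_bar G lo hi n 1 = SBA_interval G lo hi n 1 \<inter> supp G"
      by (simp add: SBA_interval_bar_def)
    have BN: "SBA_interval_bar G lo hi n (2^n) = SBA_interval G lo hi n (2^n) \<inter> supp G"
      by (simp add: SBA_interval_bar_def)
    have Bl: "SBA_interval_bar G lo hi n l = SBA_interval G lo hi n l" if "l \<noteq> 1" "l \<noteq> 2^n" for l
      using that by (simp add: SBA_interval_bar_def)
    have upper: "x \<in> SBA_interval_bar G lo hi n l \<Longrightarrow> ereal x \<le> \<mu> l" for x l
      by (auto simp: SBA_interval_bar_def SBA_interval_def \<mu>_def split: if_splits)
    have lower: "x \<in> SBA_interval_bar G lo hi n l \<Longrightarrow> l \<noteq> 1 \<Longrightarrow> \<mu> (l - 1) < ereal x" for x l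
      by (auto simp: SBA_interval_bar_def SBA_interval_def \<mu>_def split: if_splits)
    have P1: "nondegenerate_interval (SBA_interval_bar G lo hi n l)" if l: "l \<in> {1..2^n}" for l
    proof (cases "l = 1")
      case True
      obtain r where r: "\<mu> 1 = ereal r" "r \<in> interior (supp G)"
        using INNER[OF n, of 1] two unfolding \<mu>_def by auto
      obtain e where e: "e > 0" "ball r e \<subseteq> supp G" using interior_ball[OF r(2)] by blast
      have a: "r - e/2 \<in> supp G" "r \<in> supp G" using e by (auto intro!: subsetD[OF e(2)] simp: dist_real_def)
      then have "lo \<le> ereal (r - e/2)" "lo \<le> ereal r" using Th by (auto simp: Theta_def)
      then have "r - e/2 \<in> SBA_interval_bar G lo hi n 1" "r \<in> SBA_interval_bar G lo hi n 1"
        using a r e(1) unfolding B1 I1 by auto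
      then have "r - e/2 \<in> SBA_interval_bar G lo hi n l" "r \<in> SBA_interval_bar G lo hi n l"
        using True by simp_all
      moreover have "is_interval (SBA_interval_bar G lo hi n l)"
        unfolding True B1 I1 by (intro is_interval_Int ivl1 iv)
      ultimately show ?thesis using e(1) by (intro nondeg_pts[of _ "r - e/2" r]) auto
    next
      case False
      note l1 = False
      show ?thesis
      proof (cases "l = 2^n")
        case True
        obtain r where r: "\<mu> (l - 1) = ereal r" "r \<in> interior (supp G)"
          using INNER[OF n, of "l - 1"] two True unfolding \<mu>_def by auto
        obtain e where e: "e > 0" "ball r e \<subseteq> supp G" using interior_ball[OF r(2)] by blast
        have a: "r + e/4 \<in> supp G" "r + e/2 \<in> supp G" using e by (auto intro!: subsetD[OF e(2)] simp: dist_real_def)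
        then have "ereal (r + e/4) \<le> hi" "ereal (r + e/2) \<le> hi" using Th by (auto simp: Theta_def)
        moreover have "\<mu> (2^n - 1) = ereal r" using r True by simp
        ultimately have "r + e/4 \<in> SBA_interval_bar G lo hi n (2^n)" "r + e/2 \<in> SBA_interval_bar G lo hi n (2^n)"
          using a e(1) muN unfolding BN Il[OF l1[unfolded True]] by auto
        then have "r + e/4 \<in> SBA_interval_bar G lo hi n l" "r + e/2 \<in> SBA_interval_bar G lo hi n l"
          using True by simp_all
        moreover have "is_interval (SBA_interval_bar G lo hi n l)"
          unfolding True BN Il[OF l1[unfolded True]] by (intro is_interval_Int ivl2 iv)
        ultimately show ?thesis using e(1) by (intro nondeg_pts[of _ "r + e/4" "r + e/2"]) auto
      next
        case False
        have l2: "1 < l" "l < 2^n" using l l1 False by auto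
        have l3: "0 < l - 1" "l - 1 < 2^n" using l2 by auto
        obtain r where r: "\<mu> (l - 1) = ereal r" "r \<in> interior (supp G)"
          using INNER[OF n l3] unfolding \<mu>_def by blast
        obtain s where s: "\<mu> l = ereal s" "s \<in> interior (supp G)"
          using INNER[OF n, of l] l2 unfolding \<mu>_def by auto
        have "\<mu> (l - 1) < \<mu> l" using MONO[OF n, of "l - 1" l] l2 unfolding \<mu>_def by auto
        then have rs: "r < s" using r s by simp
        have "(r+s)/2 \<in> SBA_interval_bar G lo hi n l" "s \<in> SBA_interval_bar G lo hi n l"
          using r s rs unfolding Bl[OF l1 False] Il[OF l1] by auto
        moreover have "is_interval (SBA_interval_bar G lo hi n l)"
          unfolding Bl[OF l1 False] Il[OF l1] by (rule ivl2)
        ultimately show ?thesis using rs by (intro nondeg_pts[of _ "(r+s)/2" s]) auto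
      qed
    qed
    have P2: "SBA_interval_bar G lo hi n l \<inter> SBA_interval_bar G lo hi n l' = {}"
      if "l \<in> {1..2^n}" "l' \<in> {1..2^n}" "l < l'" for l l'
    proof (rule ccontr)
      assume "\<not> ?thesis"
      then obtain x where x: "x \<in> SBA_interval_bar G lo hi n l" "x \<in> SBA_interval_bar G lo hi n l'" by blast
      have "ereal x \<le> \<mu> l" using upper[OF x(1)] .
      also have "\<mu> l \<le> \<mu> (l' - 1)" using MONO'[OF n, of l "l' - 1"] that unfolding \<mu>_def by auto
      also have "\<mu> (l' - 1) < ereal x" using lower[OF x(2)] that by auto
      finally show False by simp
    qed
    have P3: "(\<Union>l\<in>{1..2^n}. SBA_interval_bar G lo hi n l) = supp G"
    proof
      show "(\<Union>l\<in>{1..2^n}. SBA_interval_bar G lo hi n l) \<subseteq> supp G"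
      proof
        fix x assume "x \<in> (\<Union>l\<in>{1..2^n}. SBA_interval_bar G lo hi n l)"
        then obtain l where l: "l \<in> {1..2^n}" "x \<in> SBA_interval_bar G lo hi n l" by blast
        show "x \<in> supp G"
        proof (cases "l = 1 \<or> l = 2^n")
          case True then show ?thesis using l by (auto simp: SBA_interval_bar_def)
        next
          case False
          have l2: "1 < l" "l < 2^n" using l False by auto
          have l3: "0 < l - 1" "l - 1 < 2^n" using l2 by auto
          obtain r where r: "\<mu> (l - 1) = ereal r" "r \<in> interior (supp G)"
            using INNER[OF n l3] unfolding \<mu>_def by blast
          obtain s where s: "\<mu> l = ereal s" "s \<in> interior (supp G)"
            using INNER[OF n, of l] l2 unfolding \<mu>_def by auto
          have "r < x" "x \<le> s" using upper[OF l(2)] lower[OF l(2)] False r s by auto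
          moreover have "r \<in> supp G" "s \<in> supp G" using r s interior_subset by auto
          ultimately show ?thesis using iv unfolding is_interval_1 by (meson less_imp_le)
        qed
      qed
    next
      show "supp G \<subseteq> (\<Union>l\<in>{1..2^n}. SBA_interval_bar G lo hi n l)"
      proof
        fix x assume xs: "x \<in> supp G"
        then have lx: "lo \<le> ereal x" and xh: "ereal x \<le> hi" using Th by (auto simp: Theta_def)
        show "x \<in> (\<Union>l\<in>{1..2^n}. SBA_interval_bar G lo hi n l)"
        proof (cases "ereal x \<le> \<mu> 1")
          case True
          then have "x \<in> SBA_interval_bar G lo hi n 1" using lx xs unfolding B1 I1 by auto
          then show ?thesis using two by force
        next
          case False
          then have "\<mu> 1 < ereal x" by simp
          moreover have "ereal x \<le> \<mu> (2^n)" using xh muN by simp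
          moreover have "(1::nat) < 2^n" using two by simp
          ultimately obtain l where l: "1 < l" "l \<le> 2^n" "\<mu> (l - 1) < ereal x" "ereal x \<le> \<mu> l"
            using chain_find[of \<mu> 1 x "2^n"] by blast
          have l1: "l \<noteq> 1" using l by simp
          have "x \<in> SBA_interval_bar G lo hi n l"
          proof (cases "l = 2^n")
            case True then show ?thesis using l xs unfolding True BN Il[OF l1[unfolded True]] by auto
          next
            case False then show ?thesis using l unfolding Bl[OF l1 False] Il[OF l1] by auto
          qed
          then show ?thesis using l by auto
        qed
      qed
    qed
    show ?thesis
    proof (intro conjI ballI impI)
      fix l l' :: nat assume "l \<in> {1..2^n}" "l' \<in> {1..2^n}" "l \<noteq> l'"
      then show "SBA_interval_bar G lo hi n l \<inter> SBA_interval_bar G lo hi n l' = {}"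
        using P2[of l l'] P2[of l' l] by (cases "l < l'") auto
    qed (use P1 P3 in auto)
  qed
  show ?thesis using reg main by blast
qed

end
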